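(* Let $s > 3/2$ be real. For $1/3 \le A \le 1$ define \[ L(A;s) = \sum_{\substack{i,j,k\in\mathbb{Z}\\ (i,j,k)\neq(0,0,0)}} \left(\frac{A+1}{A(i+j)^2+(j+k)^2+(i+k)^2}\right)^s . \] Then \[ \frac{\partial}{\partial A} L(A;s)\Big|_{A=1/2} = 0 \qquad\text{and}\qquad \frac{\partial^2}{\partial A^2} L(A;s)\Big|_{A=1/2} > 0 . \]
   Context: The function $L(A;s)$ is the Epstein zeta function of the normalised cuboidal lattice. For $u,v>0$ with $A=u^2/v^2$, the cuboidal lattice is generated by $(u,v,0)$, $(u,0,v)$, $(0,v,v)$. For $1/3\le A\le 1$ it is scaled so that its minimum nonzero squared norm is $1$, i.e. $v = 1/\sqrt{A+1}$. Its quadratic form is then $g(A;i,j,k) = \frac{1}{A+1}\bigl(A(i+j)^2+(j+k)^2+(i+k)^2\bigr)$, and the series defining $L(A;s)$ converges for $s>3/2$. The value $A=1/2$ corresponds to the body-centred cubic lattice, and $A=1$ to the face-centred cubic lattice. *)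

theory Defs
  imports "HOL-Analysis.Analysis"
begin

definition cub_form :: "real \<Rightarrow> int \<Rightarrow> int \<Rightarrow> int \<Rightarrow> real" where
  "cub_form A i j k = A * (real_of_int (i + j))^2 + (real_of_int (j + k))^2 + (real_of_int (i + k))^2"

definition L :: "real \<Rightarrow> real \<Rightarrow> real" where
  "L A s = (\<Sum>\<^sub>\<infinity>(i,j,k)\<in>(UNIV - {(0,0,0)} :: (int \<times> int \<times> int) set).
              ((A + 1) / cub_form A i j k) powr s)"

end

theory Submission
  imports Defs
begin


lemma mvt_bound:
  fixes f f' :: "real \<Rightarrow> real"
  assumes der: "\<And>t. t \<in> {min y z..max y z} \<Longrightarrow> (f has_real_derivative f' t) (at t)"
    and bnd: "\<And>t. t \<in> {min y z<..<max y z} \<Longrightarrow> \<bar>f' t\<bar> \<le> B"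
  shows "\<bar>f y - f z\<bar> \<le> B * \<bar>y - z\<bar>"
proof (cases "y = z")
  case False
  define u where "u = min y z"
  define v where "v = max y z"
  have uv: "u < v" using False by (auto simp: u_def v_def)
  have "\<And>t. u \<le> t \<Longrightarrow> t \<le> v \<Longrightarrow> (f has_real_derivative f' t) (at t)"
    by (intro der) (auto simp: u_def v_def)
  from MVT2[OF uv this] obtain t where t: "u < t" "t < v" "f v - f u = (v - u) * f' t" by blast
  have "\<bar>f' t\<bar> \<le> B" using t by (intro bnd) (auto simp: u_def v_def)
  then have "\<bar>v - u\<bar> * \<bar>f' t\<bar> \<le> \<bar>v - u\<bar> * B" by (intro mult_left_mono) auto
  then have "\<bar>f v - f u\<bar> \<le> B * \<bar>v - u\<bar>" using t by (simp add: abs_mult mult.commute)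
  then show ?thesis
    by (cases "y < z") (auto simp: u_def v_def abs_minus_commute min_def max_def split: if_splits)
qed simp

lemma taylor_bound:
  fixes f f' :: "real \<Rightarrow> real"
  assumes der: "\<And>y. y \<in> {lo<..<hi} \<Longrightarrow> (f has_real_derivative f' y) (at y)"
    and lip: "\<And>y z. y \<in> {lo<..<hi} \<Longrightarrow> z \<in> {lo<..<hi} \<Longrightarrow> \<bar>f' y - f' z\<bar> \<le> M * \<bar>y - z\<bar>"
    and M: "M \<ge> 0"
    and x: "x \<in> {lo<..<hi}" and y: "y \<in> {lo<..<hi}"
  shows "\<bar>f y - f x - f' x * (y - x)\<bar> \<le> M * (y - x)^2"
proof -
  define g where "g t = f t - f' x * t" for t
  have dg: "(g has_real_derivative (f' t - f' x)) (at t)" if "t \<in> {lo<..<hi}" for t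
    unfolding g_def using der[OF that] by (auto intro!: derivative_eq_intros)
  have "\<bar>f' t - f' x\<bar> \<le> M * \<bar>y - x\<bar>" if "t \<in> {min y x<..<max y x}" for t
  proof -
    have t': "t \<in> {lo<..<hi}" using that x y by auto
    have "\<bar>f' t - f' x\<bar> \<le> M * \<bar>t - x\<bar>" by (rule lip[OF t' x])
    also have "\<dots> \<le> M * \<bar>y - x\<bar>" using that M by (intro mult_left_mono) auto
    finally show ?thesis .
  qed
  then have "\<bar>g y - g x\<bar> \<le> (M * \<bar>y - x\<bar>) * \<bar>y - x\<bar>" if "x \<noteq> y"
    using that x y
    by (intro mvt_bound[where f'="\<lambda>t. f' t - f' x"]) (auto intro!: dg)
  then show ?thesis
    by (cases "x = y") (auto simp: g_def power2_eq_square algebra_simps)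
qed



lemma abs_summable_real: "(f::'a \<Rightarrow> real) summable_on A \<Longrightarrow> (\<lambda>n. \<bar>f n\<bar>) summable_on A"
  by (simp add: summable_on_iff_abs_summable_on_real[of f A])

lemma summable_on_diff_real:
  "(f::'a \<Rightarrow> real) summable_on A \<Longrightarrow> g summable_on A \<Longrightarrow> (\<lambda>n. f n - g n) summable_on A"
  using summable_on_add[of f A "\<lambda>n. - g n"] summable_on_uminus[of g A] by simp

lemma infsum_diff_real:
  "(f::'a \<Rightarrow> real) summable_on A \<Longrightarrow> g summable_on A \<Longrightarrow> infsum (\<lambda>n. f n - g n) A = infsum f A - infsum g A"
  using infsum_add[of f A "\<lambda>n. - g n"] summable_on_uminus[of g A] infsum_uminus[of g A] by simp

lemma deriv_infsum:
  fixes f f' :: "'i \<Rightarrow> real \<Rightarrow> real" and M :: "'i \<Rightarrow> real"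
  assumes x: "x \<in> {lo<..<hi}"
    and der: "\<And>n y. n \<in> K \<Longrightarrow> y \<in> {lo<..<hi} \<Longrightarrow> (f n has_real_derivative f' n y) (at y)"
    and lip: "\<And>n y z. n \<in> K \<Longrightarrow> y \<in> {lo<..<hi} \<Longrightarrow> z \<in> {lo<..<hi} \<Longrightarrow> \<bar>f' n y - f' n z\<bar> \<le> M n * \<bar>y - z\<bar>"
    and M0: "\<And>n. n \<in> K \<Longrightarrow> M n \<ge> 0"
    and sM: "M summable_on K"
    and sf: "\<And>y. y \<in> {lo<..<hi} \<Longrightarrow> (\<lambda>n. f n y) summable_on K"
    and sf': "(\<lambda>n. f' n x) summable_on K"
  shows "((\<lambda>y. infsum (\<lambda>n. f n y) K) has_real_derivative infsum (\<lambda>n. f' n x) K) (at x)"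
proof -
  define F where "F y = infsum (\<lambda>n. f n y) K" for y
  define D where "D = infsum (\<lambda>n. f' n x) K"
  define S where "S = infsum M K"
  have key: "\<bar>F y - F x - D * (y - x)\<bar> \<le> S * (y - x)^2" if y: "y \<in> {lo<..<hi}" for y
  proof -
    define r where "r = (\<lambda>n. f n y - f n x - f' n x * (y - x))"
    have s1: "(\<lambda>n. f n y - f n x) summable_on K" using sf[OF y] sf[OF x] by (rule summable_on_diff_real)
    have s2: "(\<lambda>n. f' n x * (y - x)) summable_on K" using sf' by (rule summable_on_cmult_left)
    have sr: "r summable_on K" unfolding r_def using s1 s2 by (rule summable_on_diff_real)
    have "infsum r K = F y - F x - D * (y - x)"
    proof -
      have e1: "infsum (\<lambda>n. f n y - f n x - f' n x * (y - x)) K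
          = infsum (\<lambda>n. f n y - f n x) K - infsum (\<lambda>n. f' n x * (y - x)) K"
        by (rule infsum_diff_real[OF s1 s2])
      have e2: "infsum (\<lambda>n. f n y - f n x) K = infsum (\<lambda>n. f n y) K - infsum (\<lambda>n. f n x) K"
        by (rule infsum_diff_real[OF sf[OF y] sf[OF x]])
      have e3: "infsum (\<lambda>n. f' n x * (y - x)) K = infsum (\<lambda>n. f' n x) K * (y - x)"
        using sf' by (intro infsum_cmult_left) auto
      show ?thesis unfolding r_def F_def D_def using e1 e2 e3 by (simp only:)
    qed
    then have "\<bar>F y - F x - D * (y - x)\<bar> = \<bar>infsum r K\<bar>" by simp
    also have "\<dots> \<le> infsum (\<lambda>n. \<bar>r n\<bar>) K"
    proof -
      have "(\<lambda>n. norm (r n)) summable_on K" using abs_summable_real[OF sr] by simp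
      from norm_infsum_bound[OF this] show ?thesis by simp
    qed
    also have "\<dots> \<le> infsum (\<lambda>n. M n * (y - x)^2) K"
    proof (rule infsum_mono)
      show "(\<lambda>n. \<bar>r n\<bar>) summable_on K" using sr by (rule abs_summable_real)
      show "(\<lambda>n. M n * (y - x)^2) summable_on K" using sM by (rule summable_on_cmult_left)
      fix n assume n: "n \<in> K"
      have "\<bar>f n y - f n x - f' n x * (y - x)\<bar> \<le> M n * (y - x)^2"
        by (rule taylor_bound[of lo hi "f n" "f' n" "M n" x y, OF der[OF n] lip[OF n] M0[OF n] x y])
      then show "\<bar>r n\<bar> \<le> M n * (y - x)^2" by (simp add: r_def)
    qed
    also have "\<dots> = S * (y - x)^2" unfolding S_def using infsum_cmult_left[where f=M and A=K and c="(y-x)^2"] sM by simp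
    finally show ?thesis .
  qed
  have ev: "eventually (\<lambda>y. norm ((F y - F x) / (y - x) - D) \<le> S * \<bar>y - x\<bar>) (at x)"
  proof -
    have "eventually (\<lambda>y. y \<in> {lo<..<hi} - {x}) (at x)" using x by (intro eventually_at_in_open) auto
    then show ?thesis
    proof eventually_elim
      case (elim y)
      then have yx: "y - x \<noteq> 0" by auto
      have "(F y - F x) / (y - x) - D = (F y - F x - D * (y - x)) / (y - x)" using yx by (simp add: diff_divide_distrib)
      then have "norm ((F y - F x) / (y - x) - D) = \<bar>F y - F x - D * (y - x)\<bar> / \<bar>y - x\<bar>" by (simp add: abs_divide)
      also have "\<dots> \<le> S * (y - x)^2 / \<bar>y - x\<bar>" using key[of y] elim by (intro divide_right_mono) auto
      also have "\<dots> = S * \<bar>y - x\<bar>"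
      proof -
        have e: "(y - x)^2 = \<bar>y - x\<bar> * \<bar>y - x\<bar>" by (simp add: power2_eq_square)
        have "S * (y - x)^2 / \<bar>y - x\<bar> = S * (\<bar>y - x\<bar> * \<bar>y - x\<bar>) / \<bar>y - x\<bar>" by (simp only: e)
        also have "\<dots> = S * \<bar>y - x\<bar>" using yx by (simp only: mult.assoc[symmetric] nonzero_mult_div_cancel_right abs_eq_0 diff_eq_eq) simp
        finally show ?thesis .
      qed
      finally show ?case .
    qed
  qed
  have lim0: "((\<lambda>y. S * \<bar>y - x\<bar>) \<longlongrightarrow> 0) (at x)"
  proof -
    have "((\<lambda>y. S * \<bar>y - x\<bar>) \<longlongrightarrow> S * \<bar>x - x\<bar>) (at x)" by (intro tendsto_intros)
    then show ?thesis by simp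
  qed
  have "((\<lambda>y. (F y - F x) / (y - x) - D) \<longlongrightarrow> 0) (at x)"
    by (rule Lim_null_comparison[OF ev lim0])
  then have "((\<lambda>y. (F y - F x) / (y - x)) \<longlongrightarrow> D) (at x)" by (rule LIM_zero_cancel)
  then show ?thesis unfolding has_field_derivative_iff F_def D_def .
qed



definition wf :: "real \<Rightarrow> real \<Rightarrow> real \<Rightarrow> real \<Rightarrow> real" where
  "wf s a b A = ((A + 1) / (A * a + b)) powr s"
definition af :: "real \<Rightarrow> real \<Rightarrow> real \<Rightarrow> real" where
  "af a b A = a / (A * a + b)"
definition bf :: "real \<Rightarrow> real" where
  "bf A = 1 / (A + 1)"
definition d1 :: "real \<Rightarrow> real \<Rightarrow> real \<Rightarrow> real \<Rightarrow> real" where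
  "d1 s a b A = - s * wf s a b A * (af a b A - bf A)"
definition d2 :: "real \<Rightarrow> real \<Rightarrow> real \<Rightarrow> real \<Rightarrow> real" where
  "d2 s a b A = s * wf s a b A * (s * (af a b A - bf A)^2 + (af a b A)^2 - ((bf A)^2))"
definition d3 :: "real \<Rightarrow> real \<Rightarrow> real \<Rightarrow> real \<Rightarrow> real" where
  "d3 s a b A = s * wf s a b A * (- s * (af a b A - bf A) * (s * (af a b A - bf A)^2 + (af a b A)^2 - ((bf A)^2))
      + 2 * s * (af a b A - bf A) * ((bf A)^2 - ((af a b A)^2)) - 2 * (af a b A)^3 + 2 * (bf A)^3)"

lemma D_af:
  assumes "A * a + b \<noteq> 0"
  shows "(af a b has_real_derivative (- ((af a b A)^2))) (at A)"
proof -
  have "((\<lambda>A. a / (A * a + b)) has_real_derivative (- ((a / (A * a + b))^2))) (at A)"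
    using assms by (auto intro!: derivative_eq_intros simp: power2_eq_square field_simps)
  moreover have "af a b = (\<lambda>A. a / (A * a + b))" by (simp add: fun_eq_iff af_def)
  ultimately show ?thesis by (simp add: af_def)
qed

lemma D_bf:
  assumes "A + 1 \<noteq> 0"
  shows "(bf has_real_derivative (- ((bf A)^2))) (at A)"
proof -
  have "((\<lambda>A. 1 / (A + 1)) has_real_derivative (- ((1 / (A + 1))^2))) (at A)"
    using assms by (auto intro!: derivative_eq_intros simp: power2_eq_square field_simps)
  moreover have "bf = (\<lambda>A. 1 / (A + 1))" by (simp add: fun_eq_iff bf_def)
  ultimately show ?thesis by (simp add: bf_def)
qed

lemma D_wf:
  assumes Q: "A * a + b > 0" and A: "A + 1 > 0"
  shows "(wf s a b has_real_derivative d1 s a b A) (at A)"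
proof -
  define g where "g A = (A + 1) / (A * a + b)" for A
  have dg: "(g has_real_derivative ((1 + 0) * (A * a + b) - (A + 1) * (1 * a + 0)) / ((A * a + b) * (A * a + b))) (at A)"
    unfolding g_def[abs_def] using Q by (auto intro!: derivative_eq_intros)
  have gpos: "g A > 0" using Q A by (simp add: g_def)
  have "((\<lambda>A. g A powr s) has_real_derivative s * g A powr (s - of_nat 1) * (((1 + 0) * (A * a + b) - (A + 1) * (1 * a + 0)) / ((A * a + b) * (A * a + b)))) (at A)"
    by (rule DERIV_fun_powr[OF dg gpos])
  moreover have "(\<lambda>A. g A powr s) = wf s a b" by (simp add: g_def wf_def fun_eq_iff)
  moreover have "s * g A powr (s - of_nat 1) * (((1 + 0) * (A * a + b) - (A + 1) * (1 * a + 0)) / ((A * a + b) * (A * a + b)))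
      = d1 s a b A"
  proof -
    have "g A powr (s - of_nat 1) = wf s a b A / g A"
      using gpos Q A by (simp add: powr_diff wf_def g_def)
    moreover have "s * (w / ((A + 1) / (A * a + b))) * (((1 + 0) * (A * a + b) - (A + 1) * (1 * a + 0)) / ((A * a + b) * (A * a + b)))
        = - s * w * (a / (A * a + b) - 1 / (A + 1))" for w
    proof -
      have gen: "s * (w / (c / q)) * ((1 * q - c * a) / (q * q)) = - s * w * (a / q - 1 / c)"
        if "q \<noteq> 0" "c \<noteq> 0" for q c :: real
        using that by (simp add: field_simps)
      have Qn: "A * a + b \<noteq> 0" "A + 1 \<noteq> 0" using Q A by auto
      show ?thesis using gen[OF Qn] by simp
    qed
    ultimately show ?thesis
      by (simp add: d1_def af_def bf_def g_def)
  qed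
  ultimately show ?thesis by simp
qed

lemma D_d1:
  assumes Q: "A * a + b > 0" and A: "A + 1 > 0"
  shows "(d1 s a b has_real_derivative d2 s a b A) (at A)"
proof -
  have e: "d1 s a b = (\<lambda>A. - s * wf s a b A * (af a b A - bf A))" by (simp add: d1_def fun_eq_iff)
  have "((\<lambda>A. - s * wf s a b A * (af a b A - bf A)) has_real_derivative
        (- s * d1 s a b A) * (af a b A - bf A) + (- ((af a b A)^2) - - ((bf A)^2)) * (- s * wf s a b A)) (at A)"
    by (intro DERIV_mult DERIV_cmult DERIV_diff D_wf D_af D_bf) (use Q A in auto)
  moreover have "(- s * d1 s a b A) * (af a b A - bf A) + (- ((af a b A)^2) - - ((bf A)^2)) * (- s * wf s a b A) = d2 s a b A"
    by (simp add: d1_def d2_def algebra_simps power2_eq_square)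
  ultimately show ?thesis using e by simp
qed

lemma D_d2:
  assumes Q: "A * a + b > 0" and A: "A + 1 > 0"
  shows "(d2 s a b has_real_derivative d3 s a b A) (at A)"
proof -
  have e: "d2 s a b = (\<lambda>A. s * wf s a b A * (s * (af a b A - bf A)^2 + (af a b A)^2 - ((bf A)^2)))" by (simp add: d2_def fun_eq_iff)
  have "((\<lambda>A. s * wf s a b A * (s * (af a b A - bf A)^2 + (af a b A)^2 - ((bf A)^2))) has_real_derivative
        (s * d1 s a b A) * (s * (af a b A - bf A)^2 + (af a b A)^2 - ((bf A)^2))
        + (s * (of_nat 2 * ((- ((af a b A)^2) - - ((bf A)^2)) * (af a b A - bf A) ^ (2 - Suc 0)))
           + of_nat 2 * (- ((af a b A)^2) * (af a b A) ^ (2 - Suc 0))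
           - of_nat 2 * (- ((bf A)^2) * (bf A) ^ (2 - Suc 0))) * (s * wf s a b A)) (at A)"
    by (intro DERIV_mult DERIV_cmult DERIV_diff DERIV_add DERIV_power D_wf D_af D_bf) (use Q A in auto)
  moreover have "(s * d1 s a b A) * (s * (af a b A - bf A)^2 + (af a b A)^2 - ((bf A)^2))
        + (s * (of_nat 2 * ((- ((af a b A)^2) - - ((bf A)^2)) * (af a b A - bf A) ^ (2 - Suc 0)))
           + of_nat 2 * (- ((af a b A)^2) * (af a b A) ^ (2 - Suc 0))
           - of_nat 2 * (- ((bf A)^2) * (bf A) ^ (2 - Suc 0))) * (s * wf s a b A) = d3 s a b A"
    by (simp add: d1_def d3_def algebra_simps power2_eq_square power3_eq_cube)
  ultimately show ?thesis using e by simp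
qed



lemma abs_mult_le: "\<bar>x\<bar> \<le> X \<Longrightarrow> \<bar>y\<bar> \<le> Y \<Longrightarrow> \<bar>x * y\<bar> \<le> X * (Y::real)"
  unfolding abs_mult by (rule mult_mono) auto

lemma poly_bnds:
  fixes s al be :: real
  assumes s: "s \<ge> 0" and al: "0 \<le> al" "al \<le> 4" and be: "0 \<le> be" "be \<le> 1"
  shows "\<bar>al - be\<bar> \<le> 4"
    and "\<bar>s * (al - be)^2 + al^2 - be^2\<bar> \<le> 16 * s + 17"
    and "\<bar>- s * (al - be) * (s * (al - be)^2 + al^2 - be^2) + 2 * s * (al - be) * (be^2 - al^2)
          - 2 * al^3 + 2 * be^3\<bar> \<le> 64 * s^2 + 204 * s + 130"
proof -
  have e: "\<bar>al - be\<bar> \<le> 4" using al be by auto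
  have e2: "(al - be)^2 \<le> 16"
  proof -
    have "\<bar>al - be\<bar>^2 \<le> 4^2" using e by (intro power_mono) auto
    then show ?thesis by simp
  qed
  have a2: "al^2 \<le> 16" using power_mono[OF al(2) al(1), of 2] by simp
  have b2: "be^2 \<le> 1" using power_mono[OF be(2) be(1), of 2] by simp
  have a3: "al^3 \<le> 64" using power_mono[OF al(2) al(1), of 3] by simp
  have b3: "be^3 \<le> 1" using power_mono[OF be(2) be(1), of 3] by simp
  have a20: "al^2 \<ge> 0" "be^2 \<ge> 0" "al^3 \<ge> 0" "be^3 \<ge> 0" using al be by auto
  have se2: "s * (al - be)^2 \<le> s * 16" using e2 s by (intro mult_left_mono) auto
  have se20: "s * (al - be)^2 \<ge> 0" using s by simp
  have P: "\<bar>s * (al - be)^2 + al^2 - be^2\<bar> \<le> 16 * s + 17"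
    using se2 se20 a2 b2 a20 by linarith
  have t1: "\<bar>- s * (al - be) * (s * (al - be)^2 + al^2 - be^2)\<bar> \<le> (s * 4) * (16 * s + 17)"
  proof -
    have "\<bar>- s * (al - be)\<bar> = s * \<bar>al - be\<bar>" using s by (simp add: abs_mult)
    also have "\<dots> \<le> s * 4" using mult_left_mono[OF e s] .
    finally have "\<bar>- s * (al - be)\<bar> \<le> s * 4" .
    then show ?thesis by (rule abs_mult_le[OF _ P])
  qed
  have t2: "\<bar>2 * s * (al - be) * (be^2 - al^2)\<bar> \<le> (2 * s * 4) * 16"
  proof -
    have "\<bar>2 * s * (al - be)\<bar> = (2 * s) * \<bar>al - be\<bar>" using s by (simp add: abs_mult)
    also have "\<dots> \<le> (2 * s) * 4" using mult_left_mono[OF e, of "2 * s"] s by simp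
    finally have "\<bar>2 * s * (al - be)\<bar> \<le> 2 * s * 4" by simp
    moreover have "\<bar>be^2 - al^2\<bar> \<le> 16" using a2 b2 a20 by linarith
    ultimately show ?thesis by (rule abs_mult_le)
  qed
  have eq: "(s * 4) * (16 * s + 17) + (2 * s * 4) * 16 + 128 + 2 = 64 * s^2 + 196 * s + 130"
    by (simp add: algebra_simps power2_eq_square)
  have "\<bar>- s * (al - be) * (s * (al - be)^2 + al^2 - be^2) + 2 * s * (al - be) * (be^2 - al^2)
          - 2 * al^3 + 2 * be^3\<bar> \<le> 64 * s^2 + 196 * s + 130"
    using t1 t2 a3 b3 a20 eq by linarith
  also have "\<dots> \<le> 64 * s^2 + 204 * s + 130" using s by simp
  finally show "\<bar>- s * (al - be) * (s * (al - be)^2 + al^2 - be^2) + 2 * s * (al - be) * (be^2 - al^2)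
          - 2 * al^3 + 2 * be^3\<bar> \<le> 64 * s^2 + 204 * s + 130" .
  show "\<bar>al - be\<bar> \<le> 4" by (rule e)
  show "\<bar>s * (al - be)^2 + al^2 - be^2\<bar> \<le> 16 * s + 17" by (rule P)
qed

definition Wb :: "real \<Rightarrow> real \<Rightarrow> real" where
  "Wb s n = 8 powr s * n powr (- s)"

lemma basic_bnds:
  fixes s a b A :: real
  assumes s: "s \<ge> 0" and a: "a \<ge> 0" and b: "b \<ge> 0" and ab: "a + b > 0" and A: "A \<in> {1/4<..<1}"
  shows "A * a + b > 0" and "0 \<le> af a b A" and "af a b A \<le> 4" and "0 \<le> bf A" and "bf A \<le> 1"
    and "0 \<le> wf s a b A" and "wf s a b A \<le> Wb s (a + b)"
proof -
  have A1: "1/4 < A" "A < 1" using A by auto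
  have Qge: "A * a + b \<ge> (a + b) / 4"
  proof -
    have "(1/4) * a \<le> A * a" using mult_right_mono[of "1/4" A a] A1 a by simp
    then show ?thesis using b by simp
  qed
  have "0 < (a + b) / 4" using ab by simp
  then show Qp: "A * a + b > 0" using Qge by (rule less_le_trans)
  show "0 \<le> af a b A" using Qp a by (simp add: af_def)
  show "af a b A \<le> 4"
  proof -
    have "a \<le> 4 * (A * a + b)" using Qge b by (simp add: algebra_simps)
    then show ?thesis using Qp by (simp add: af_def divide_le_eq)
  qed
  show "0 \<le> bf A" using A1 by (simp add: bf_def)
  show "bf A \<le> 1" using A1 by (simp add: bf_def)
  show "0 \<le> wf s a b A" by (simp add: wf_def)
  have base: "(A + 1) / (A * a + b) \<le> 8 / (a + b)"
  proof -
    have "(A + 1) / (A * a + b) \<le> 2 / ((a + b) / 4)"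
      using A1 Qp Qge ab by (intro frac_le) auto
    then show ?thesis by simp
  qed
  have "wf s a b A \<le> (8 / (a + b)) powr s"
    unfolding wf_def using base A1 Qp s by (intro powr_mono2) auto
  also have "\<dots> = Wb s (a + b)"
    using ab by (simp add: Wb_def powr_divide powr_minus_divide)
  finally show "wf s a b A \<le> Wb s (a + b)" .
qed

lemma deriv_bnds:
  fixes s a b A :: real
  assumes s: "s \<ge> 0" and a: "a \<ge> 0" and b: "b \<ge> 0" and ab: "a + b > 0" and A: "A \<in> {1/4<..<1}"
  shows "\<bar>wf s a b A\<bar> \<le> Wb s (a + b)"
    and "\<bar>d1 s a b A\<bar> \<le> (4 * s) * Wb s (a + b)"
    and "\<bar>d2 s a b A\<bar> \<le> (s * (16 * s + 17)) * Wb s (a + b)"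
    and "\<bar>d3 s a b A\<bar> \<le> (s * (64 * s^2 + 204 * s + 130)) * Wb s (a + b)"
proof -
  note bb = basic_bnds[OF s a b ab A]
  note pb = poly_bnds[OF s bb(2) bb(3) bb(4) bb(5)]
  have w: "\<bar>wf s a b A\<bar> \<le> Wb s (a + b)" using bb by simp
  show "\<bar>wf s a b A\<bar> \<le> Wb s (a + b)" by (rule w)
  have sw: "\<bar>s * wf s a b A\<bar> \<le> s * Wb s (a + b)" using w s by (simp add: abs_mult mult_left_mono)
  have "\<bar>(s * wf s a b A) * (af a b A - bf A)\<bar> \<le> (s * Wb s (a + b)) * 4"
    by (rule abs_mult_le[OF sw pb(1)])
  then show "\<bar>d1 s a b A\<bar> \<le> (4 * s) * Wb s (a + b)"
    unfolding d1_def by (simp add: algebra_simps)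
  have "\<bar>(s * wf s a b A) * (s * (af a b A - bf A)^2 + (af a b A)^2 - (bf A)^2)\<bar> \<le> (s * Wb s (a + b)) * (16 * s + 17)"
    by (rule abs_mult_le[OF sw pb(2)])
  then show "\<bar>d2 s a b A\<bar> \<le> (s * (16 * s + 17)) * Wb s (a + b)"
    unfolding d2_def by (simp add: algebra_simps)
  have "\<bar>(s * wf s a b A) * (- s * (af a b A - bf A) * (s * (af a b A - bf A)^2 + (af a b A)^2 - (bf A)^2)
      + 2 * s * (af a b A - bf A) * ((bf A)^2 - (af a b A)^2) - 2 * (af a b A)^3 + 2 * (bf A)^3)\<bar>
      \<le> (s * Wb s (a + b)) * (64 * s^2 + 204 * s + 130)"
    by (rule abs_mult_le[OF sw pb(3)])
  then show "\<bar>d3 s a b A\<bar> \<le> (s * (64 * s^2 + 204 * s + 130)) * Wb s (a + b)"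
    unfolding d3_def by (simp add: algebra_simps)
qed



definition hq :: "real \<Rightarrow> int \<Rightarrow> real" where
  "hq q i = (1 + real_of_int \<bar>i\<bar>) powr (- q)"

lemma hq_nonneg: "hq q i \<ge> 0" by (simp add: hq_def)

lemma hq_summable_nat:
  assumes q: "q > 1"
  shows "(\<lambda>n::nat. (1 + real n) powr (- q)) summable_on UNIV"
proof -
  have "summable (\<lambda>n::nat. real n powr (- q))" using q by (subst summable_real_powr_iff) auto
  then have "summable (\<lambda>n::nat. real (Suc n) powr (- q))" by (subst summable_Suc_iff)
  then have "summable (\<lambda>n::nat. (1 + real n) powr (- q))" by (simp add: add.commute)
  then show ?thesis by (subst summable_on_UNIV_nonneg_real_iff) auto
qed

lemma hq_summable:
  assumes q: "q > 1"
  shows "hq q summable_on UNIV"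
proof -
  have s1: "hq q summable_on (range int)"
  proof -
    have "(hq q \<circ> int) summable_on UNIV" using hq_summable_nat[OF q] by (simp add: hq_def o_def)
    then show ?thesis by (subst summable_on_reindex) (auto simp: inj_on_def)
  qed
  have s2: "hq q summable_on (range (\<lambda>n. - int (Suc n)))"
  proof -
    have "(hq q \<circ> (\<lambda>n. - int (Suc n))) summable_on UNIV"
    proof (rule summable_on_comparison_test[OF hq_summable_nat[OF q]])
      fix n :: nat
      show "(hq q \<circ> (\<lambda>n. - int (Suc n))) n \<le> (1 + real n) powr (- q)"
        using q by (simp add: hq_def o_def powr_mono2')
      show "0 \<le> (hq q \<circ> (\<lambda>n. - int (Suc n))) n" by (simp add: hq_def)
    qed
    then show ?thesis by (subst summable_on_reindex) (auto simp: inj_on_def)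
  qed
  have "hq q summable_on (range int \<union> range (\<lambda>n. - int (Suc n)))"
    by (rule summable_on_Un_disjoint[OF s1 s2]) auto
  moreover have "range int \<union> range (\<lambda>n. - int (Suc n)) = UNIV"
  proof -
    have "x \<in> range int \<union> range (\<lambda>n. - int (Suc n))" for x :: int
    proof (cases "x \<ge> 0")
      case True then show ?thesis by (auto intro!: image_eqI[of _ _ "nat x"])
    next
      case False then show ?thesis by (auto intro!: image_eqI[of _ _ "nat (- x - 1)"])
    qed
    then show ?thesis by auto
  qed
  ultimately show ?thesis by simp
qed

lemma prod2_summable:
  fixes h :: "int \<Rightarrow> real"
  assumes h: "h summable_on UNIV" and h0: "\<And>i. h i \<ge> 0"
  shows "(\<lambda>p. h (fst p) * h (snd p)) summable_on (UNIV :: (int \<times> int) set)"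
proof -
  have "(\<lambda>p. h (fst p) * h (snd p)) summable_on Sigma UNIV (\<lambda>_. UNIV)"
  proof (rule summable_on_SigmaI)
    fix x :: int
    show "((\<lambda>y. h (fst (x, y)) * h (snd (x, y))) has_sum h x * infsum h UNIV) UNIV"
      using has_sum_cmult_right[OF has_sum_infsum[OF h], of "h x"] by simp
  next
    show "(\<lambda>x. h x * infsum h UNIV) summable_on UNIV" using h by (rule summable_on_cmult_left)
  next
    fix x y show "0 \<le> h (fst (x, y)) * h (snd (x, y))" using h0 by simp
  qed
  then show ?thesis by simp
qed

lemma prod3_summable:
  fixes h :: "int \<Rightarrow> real"
  assumes h: "h summable_on UNIV" and h0: "\<And>i. h i \<ge> 0"
  shows "(\<lambda>p. h (fst p) * (h (fst (snd p)) * h (snd (snd p)))) summable_on (UNIV :: (int \<times> int \<times> int) set)"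
proof -
  note G = prod2_summable[OF h h0]
  have "(\<lambda>p. h (fst p) * (h (fst (snd p)) * h (snd (snd p)))) summable_on Sigma UNIV (\<lambda>_. UNIV)"
  proof (rule summable_on_SigmaI)
    fix x :: int
    show "((\<lambda>y. h (fst (x, y)) * (h (fst (snd (x, y))) * h (snd (snd (x, y))))) has_sum
          h x * infsum (\<lambda>p. h (fst p) * h (snd p)) UNIV) UNIV"
      using has_sum_cmult_right[OF has_sum_infsum[OF G], of "h x"] by simp
  next
    show "(\<lambda>x. h x * infsum (\<lambda>p. h (fst p) * h (snd p)) UNIV) summable_on UNIV" using h by (rule summable_on_cmult_left)
  next
    fix x y show "0 \<le> h (fst (x, y)) * (h (fst (snd (x, y))) * h (snd (snd (x, y))))" using h0 by simp
  qed
  then show ?thesis by simp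
qed



lemma one_abs_sq_le:
  fixes x N :: real
  assumes "N \<ge> 1" "x^2 \<le> N"
  shows "(1 + \<bar>x\<bar>)^2 \<le> 4 * N"
proof -
  have "0 \<le> (\<bar>x\<bar> - 1)^2" by simp
  then have "2 * \<bar>x\<bar> \<le> 1 + x^2" by (simp add: power2_eq_square algebra_simps)
  then have "(1 + \<bar>x\<bar>)^2 \<le> 2 * (1 + x^2)" by (simp add: power2_eq_square algebra_simps)
  also have "\<dots> \<le> 4 * N" using assms by simp
  finally show ?thesis .
qed

lemma hq_lower:
  fixes x N s :: real
  assumes "N \<ge> 1" "x^2 \<le> N" "s \<ge> 0"
  shows "(4 * N) powr (- (s / 3)) \<le> (1 + \<bar>x\<bar>) powr (- (2 * s / 3))"
proof -
  have e1: "((1 + \<bar>x\<bar>) powr 2) powr (- (s / 3)) = (1 + \<bar>x\<bar>) powr (2 * (- (s / 3)))"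
    by (rule powr_powr)
  have e2: "(1 + \<bar>x\<bar>) powr 2 = (1 + \<bar>x\<bar>)^2" by simp
  have "(1 + \<bar>x\<bar>) powr (- (2 * s / 3)) = ((1 + \<bar>x\<bar>)^2) powr (- (s / 3))"
    using e1 e2 by simp
  also have "\<dots> \<ge> (4 * N) powr (- (s / 3))"
    using assms one_abs_sq_le[OF assms(1,2)] by (intro powr_mono2') auto
  finally show ?thesis .
qed

lemma key_bnd:
  fixes x y z N s :: real
  assumes N: "N \<ge> 1" and xyz: "x^2 + y^2 + z^2 \<le> N" and s: "s \<ge> 0"
  shows "N powr (- s) \<le> 4 powr s *
     ((1 + \<bar>x\<bar>) powr (- (2 * s / 3)) * ((1 + \<bar>y\<bar>) powr (- (2 * s / 3)) * (1 + \<bar>z\<bar>) powr (- (2 * s / 3))))"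
proof -
  define c where "c = (4 * N) powr (- (s / 3))"
  have c0: "c \<ge> 0" by (simp add: c_def)
  have hx: "c \<le> (1 + \<bar>x\<bar>) powr (- (2 * s / 3))" unfolding c_def
    using xyz by (intro hq_lower N s) (smt (verit) zero_le_power2)
  have hy: "c \<le> (1 + \<bar>y\<bar>) powr (- (2 * s / 3))" unfolding c_def
    using xyz by (intro hq_lower N s) (smt (verit) zero_le_power2)
  have hz: "c \<le> (1 + \<bar>z\<bar>) powr (- (2 * s / 3))" unfolding c_def
    using xyz by (intro hq_lower N s) (smt (verit) zero_le_power2)
  have "c * (c * c) \<le> (1 + \<bar>x\<bar>) powr (- (2 * s / 3)) * ((1 + \<bar>y\<bar>) powr (- (2 * s / 3)) * (1 + \<bar>z\<bar>) powr (- (2 * s / 3)))"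
    using hx hy hz c0 by (intro mult_mono) (auto intro: mult_nonneg_nonneg)
  moreover have "c * (c * c) = 4 powr (- s) * N powr (- s)"
  proof -
    have "c * (c * c) = c ^ 3" by (simp add: power3_eq_cube)
    also have "\<dots> = (4 * N) powr (of_nat 3 * (- (s / 3)))" unfolding c_def using N by (intro powr_power) auto
    also have "\<dots> = (4 * N) powr (- s)" by simp
    also have "\<dots> = 4 powr (- s) * N powr (- s)" by (simp add: powr_mult)
    finally show ?thesis .
  qed
  ultimately have "4 powr (- s) * N powr (- s) \<le> (1 + \<bar>x\<bar>) powr (- (2 * s / 3)) * ((1 + \<bar>y\<bar>) powr (- (2 * s / 3)) * (1 + \<bar>z\<bar>) powr (- (2 * s / 3)))"
    by simp
  then have "4 powr s * (4 powr (- s) * N powr (- s)) \<le> 4 powr s * ((1 + \<bar>x\<bar>) powr (- (2 * s / 3)) * ((1 + \<bar>y\<bar>) powr (- (2 * s / 3)) * (1 + \<bar>z\<bar>) powr (- (2 * s / 3))))"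
    by (intro mult_left_mono) auto
  moreover have "4 powr s * (4 powr (- s) * N powr (- s)) = N powr (- s)"
    by (simp add: powr_minus field_simps)
  ultimately show ?thesis by simp
qed

definition aa :: "int \<times> int \<times> int \<Rightarrow> real" where
  "aa p = (case p of (i, j, k) \<Rightarrow> (real_of_int (i + j))^2)"
definition bb :: "int \<times> int \<times> int \<Rightarrow> real" where
  "bb p = (case p of (i, j, k) \<Rightarrow> (real_of_int (j + k))^2 + (real_of_int (i + k))^2)"
definition KK :: "(int \<times> int \<times> int) set" where
  "KK = UNIV - {(0, 0, 0)}"

lemma aa_nonneg: "aa p \<ge> 0" by (cases p) (simp add: aa_def)
lemma bb_nonneg: "bb p \<ge> 0" by (cases p) (simp add: bb_def)

lemma n2_le: "(real_of_int i)^2 + (real_of_int j)^2 + (real_of_int k)^2 \<le> aa (i, j, k) + bb (i, j, k)"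
proof -
  have "aa (i, j, k) + bb (i, j, k) = (real_of_int i)^2 + (real_of_int j)^2 + (real_of_int k)^2 + (real_of_int (i + j + k))^2"
    by (simp add: aa_def bb_def power2_eq_square algebra_simps)
  then show ?thesis by simp
qed

lemma n2_ge1:
  assumes "(i, j, k) \<in> KK"
  shows "(real_of_int i)^2 + (real_of_int j)^2 + (real_of_int k)^2 \<ge> 1"
proof -
  have "i \<noteq> 0 \<or> j \<noteq> 0 \<or> k \<noteq> 0" using assms by (auto simp: KK_def)
  moreover have "(real_of_int t)^2 \<ge> 1" if "t \<noteq> 0" for t
  proof -
    have "\<bar>real_of_int t\<bar> \<ge> 1" using that by linarith
    then have "1^2 \<le> \<bar>real_of_int t\<bar>^2" by (intro power_mono) auto
    then show ?thesis by simp
  qed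
  moreover have "(real_of_int t)^2 \<ge> 0" for t by simp
  ultimately show ?thesis by (smt (verit))
qed

lemma N_ge1:
  assumes "p \<in> KK" shows "aa p + bb p \<ge> 1"
proof -
  obtain i j k where pijk: "p = (i, j, k)" by (cases p)
  show ?thesis using n2_ge1[of i j k] n2_le[of i j k] assms pijk by simp
qed

lemma N_summable:
  assumes s: "s > 3/2"
  shows "(\<lambda>p. (aa p + bb p) powr (- s)) summable_on KK"
proof -
  define q where "q = 2 * s / 3"
  have q: "q > 1" using s by (simp add: q_def)
  define H where "H p = hq q (fst p) * (hq q (fst (snd p)) * hq q (snd (snd p)))" for p :: "int \<times> int \<times> int"
  have "H summable_on UNIV" unfolding H_def by (rule prod3_summable[OF hq_summable[OF q] hq_nonneg])
  then have "(\<lambda>p. 4 powr s * H p) summable_on UNIV" by (rule summable_on_cmult_right)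
  then have S: "(\<lambda>p. 4 powr s * H p) summable_on KK" by (rule summable_on_subset_banach) auto
  show ?thesis
  proof (rule summable_on_comparison_test[OF S])
    fix p assume p: "p \<in> KK"
    obtain i j k where pijk: "p = (i, j, k)" by (cases p)
    have N1: "aa p + bb p \<ge> 1" using N_ge1[OF p] .
    have le: "(real_of_int i)^2 + (real_of_int j)^2 + (real_of_int k)^2 \<le> aa p + bb p"
      using n2_le pijk by simp
    show "(aa p + bb p) powr (- s) \<le> 4 powr s * H p"
      using key_bnd[OF N1 le, of s] s pijk by (simp add: H_def hq_def q_def)
    show "0 \<le> (aa p + bb p) powr (- s)" by simp
  qed
qed

lemma L_eq: "L A s = infsum (\<lambda>p. wf s (aa p) (bb p) A) KK"
  unfolding L_def KK_def
  by (intro infsum_cong) (auto simp: wf_def aa_def bb_def cub_form_def add.assoc)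



lemma summable_on_abs_bound:
  fixes f g :: "'a \<Rightarrow> real"
  assumes "g summable_on A" "\<And>x. x \<in> A \<Longrightarrow> \<bar>f x\<bar> \<le> g x"
  shows "f summable_on A"
proof -
  have "(\<lambda>x. norm (f x)) summable_on A"
    by (rule summable_on_comparison_test[OF assms(1)]) (use assms(2) in auto)
  then show ?thesis using summable_on_iff_abs_summable_on_real[of f A] by simp
qed

definition II :: "real set" where "II = {1/4<..<1}"

lemma pt_facts:
  assumes "p \<in> KK"
  shows "aa p \<ge> 0" "bb p \<ge> 0" "aa p + bb p > 0"
  using aa_nonneg bb_nonneg N_ge1[OF assms] by auto

lemma Wp_summable:
  assumes s: "s > 3/2"
  shows "(\<lambda>p. C * Wb s (aa p + bb p)) summable_on KK"
proof -
  have "(\<lambda>p. 8 powr s * (aa p + bb p) powr (- s)) summable_on KK"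
    using N_summable[OF s] by (rule summable_on_cmult_right)
  then have "(\<lambda>p. Wb s (aa p + bb p)) summable_on KK" by (simp add: Wb_def)
  then show ?thesis by (rule summable_on_cmult_right)
qed

lemma seg_sub: "y \<in> II \<Longrightarrow> z \<in> II \<Longrightarrow> t \<in> {min y z..max y z} \<Longrightarrow> t \<in> II"
  by (auto simp: II_def)

lemma first_deriv:
  assumes s: "s > 3/2" and x: "x \<in> II"
  shows "((\<lambda>A. L A s) has_real_derivative infsum (\<lambda>p. d1 s (aa p) (bb p) x) KK) (at x)"
proof -
  have s0: "s \<ge> 0" using s by simp
  have "((\<lambda>A. infsum (\<lambda>p. wf s (aa p) (bb p) A) KK) has_real_derivative infsum (\<lambda>p. d1 s (aa p) (bb p) x) KK) (at x)"
  proof (rule deriv_infsum[where lo="1/4" and hi=1 and M="\<lambda>p. (s * (16 * s + 17)) * Wb s (aa p + bb p)"])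
    show "x \<in> {1/4<..<1}" using x by (simp add: II_def)
  next
    fix p and y :: real assume p: "p \<in> KK" and y: "y \<in> {1/4<..<1}"
    show "((wf s (aa p) (bb p)) has_real_derivative d1 s (aa p) (bb p) y) (at y)"
      using basic_bnds(1)[OF s0 pt_facts[OF p] y] y by (intro D_wf) auto
  next
    fix p and y z :: real assume p: "p \<in> KK" and y: "y \<in> {1/4<..<1}" and z: "z \<in> {1/4<..<1}"
    show "\<bar>d1 s (aa p) (bb p) y - d1 s (aa p) (bb p) z\<bar> \<le> (s * (16 * s + 17)) * Wb s (aa p + bb p) * \<bar>y - z\<bar>"
    proof (rule mvt_bound)
      fix t assume t: "t \<in> {min y z..max y z}"
      then have t': "t \<in> {1/4<..<1}" using y z by auto
      show "(d1 s (aa p) (bb p) has_real_derivative d2 s (aa p) (bb p) t) (at t)"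
        using basic_bnds(1)[OF s0 pt_facts[OF p] t'] t' by (intro D_d1) auto
    next
      fix t assume t: "t \<in> {min y z<..<max y z}"
      then have t': "t \<in> {1/4<..<1}" using y z by auto
      show "\<bar>d2 s (aa p) (bb p) t\<bar> \<le> (s * (16 * s + 17)) * Wb s (aa p + bb p)"
        using deriv_bnds(3)[OF s0 pt_facts[OF p] t'] .
    qed
  next
    fix p assume p: "p \<in> KK"
    have "Wb s (aa p + bb p) \<ge> 0" by (simp add: Wb_def)
    then show "(s * (16 * s + 17)) * Wb s (aa p + bb p) \<ge> 0" using s0 by simp
  next
    show "(\<lambda>p. (s * (16 * s + 17)) * Wb s (aa p + bb p)) summable_on KK" by (rule Wp_summable[OF s])
  next
    fix y :: real assume y: "y \<in> {1/4<..<1}"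
    show "(\<lambda>p. wf s (aa p) (bb p) y) summable_on KK"
    proof (rule summable_on_abs_bound[OF Wp_summable[OF s, of 1]])
      fix p assume p: "p \<in> KK"
      show "\<bar>wf s (aa p) (bb p) y\<bar> \<le> 1 * Wb s (aa p + bb p)" using deriv_bnds(1)[OF s0 pt_facts[OF p] y] by simp
    qed
  next
    show "(\<lambda>p. d1 s (aa p) (bb p) x) summable_on KK"
    proof (rule summable_on_abs_bound[OF Wp_summable[OF s, of "4 * s"]])
      fix p assume p: "p \<in> KK"
      have x': "x \<in> {1/4<..<1}" using x by (simp add: II_def)
      show "\<bar>d1 s (aa p) (bb p) x\<bar> \<le> 4 * s * Wb s (aa p + bb p)" using deriv_bnds(2)[OF s0 pt_facts[OF p] x'] by simp
    qed
  qed
  moreover have "(\<lambda>A. infsum (\<lambda>p. wf s (aa p) (bb p) A) KK) = (\<lambda>A. L A s)"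
    by (simp add: L_eq)
  ultimately show ?thesis by simp
qed

lemma second_deriv:
  assumes s: "s > 3/2" and x: "x \<in> II"
  shows "(deriv (\<lambda>A. L A s) has_real_derivative infsum (\<lambda>p. d2 s (aa p) (bb p) x) KK) (at x)"
proof -
  have s0: "s \<ge> 0" using s by simp
  have "((\<lambda>A. infsum (\<lambda>p. d1 s (aa p) (bb p) A) KK) has_real_derivative infsum (\<lambda>p. d2 s (aa p) (bb p) x) KK) (at x)"
  proof (rule deriv_infsum[where lo="1/4" and hi=1 and M="\<lambda>p. (s * (64 * s^2 + 204 * s + 130)) * Wb s (aa p + bb p)"])
    show "x \<in> {1/4<..<1}" using x by (simp add: II_def)
  next
    fix p and y :: real assume p: "p \<in> KK" and y: "y \<in> {1/4<..<1}"
    show "((d1 s (aa p) (bb p)) has_real_derivative d2 s (aa p) (bb p) y) (at y)"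
      using basic_bnds(1)[OF s0 pt_facts[OF p] y] y by (intro D_d1) auto
  next
    fix p and y z :: real assume p: "p \<in> KK" and y: "y \<in> {1/4<..<1}" and z: "z \<in> {1/4<..<1}"
    show "\<bar>d2 s (aa p) (bb p) y - d2 s (aa p) (bb p) z\<bar> \<le> (s * (64 * s^2 + 204 * s + 130)) * Wb s (aa p + bb p) * \<bar>y - z\<bar>"
    proof (rule mvt_bound)
      fix t assume t: "t \<in> {min y z..max y z}"
      then have t': "t \<in> {1/4<..<1}" using y z by auto
      show "(d2 s (aa p) (bb p) has_real_derivative d3 s (aa p) (bb p) t) (at t)"
        using basic_bnds(1)[OF s0 pt_facts[OF p] t'] t' by (intro D_d2) auto
    next
      fix t assume t: "t \<in> {min y z<..<max y z}"
      then have t': "t \<in> {1/4<..<1}" using y z by auto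
      show "\<bar>d3 s (aa p) (bb p) t\<bar> \<le> (s * (64 * s^2 + 204 * s + 130)) * Wb s (aa p + bb p)"
        using deriv_bnds(4)[OF s0 pt_facts[OF p] t'] .
    qed
  next
    fix p assume p: "p \<in> KK"
    have "Wb s (aa p + bb p) \<ge> 0" by (simp add: Wb_def)
    moreover have "s * (64 * s^2 + 204 * s + 130) \<ge> 0" using s0 by simp
    ultimately show "(s * (64 * s^2 + 204 * s + 130)) * Wb s (aa p + bb p) \<ge> 0" by simp
  next
    show "(\<lambda>p. (s * (64 * s^2 + 204 * s + 130)) * Wb s (aa p + bb p)) summable_on KK" by (rule Wp_summable[OF s])
  next
    fix y :: real assume y: "y \<in> {1/4<..<1}"
    show "(\<lambda>p. d1 s (aa p) (bb p) y) summable_on KK"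
    proof (rule summable_on_abs_bound[OF Wp_summable[OF s, of "4 * s"]])
      fix p assume p: "p \<in> KK"
      show "\<bar>d1 s (aa p) (bb p) y\<bar> \<le> 4 * s * Wb s (aa p + bb p)" using deriv_bnds(2)[OF s0 pt_facts[OF p] y] by simp
    qed
  next
    show "(\<lambda>p. d2 s (aa p) (bb p) x) summable_on KK"
    proof (rule summable_on_abs_bound[OF Wp_summable[OF s, of "s * (16 * s + 17)"]])
      fix p assume p: "p \<in> KK"
      have x': "x \<in> {1/4<..<1}" using x by (simp add: II_def)
      show "\<bar>d2 s (aa p) (bb p) x\<bar> \<le> s * (16 * s + 17) * Wb s (aa p + bb p)" using deriv_bnds(3)[OF s0 pt_facts[OF p] x'] by simp
    qed
  qed
  note D = this
  have eq: "infsum (\<lambda>p. d1 s (aa p) (bb p) y) KK = deriv (\<lambda>A. L A s) y" if "y \<in> II" for y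
    using DERIV_imp_deriv[OF first_deriv[OF s that]] by simp
  have oII: "open II" by (simp add: II_def)
  show ?thesis by (rule has_field_derivative_transform_within_open[OF D oII x eq])
qed



lemma d1_half:
  assumes "a \<ge> 0" "b \<ge> 0" "a + b > 0"
  shows "d1 s a b (1/2) = -(2 * s / 3) * ((3 / (a + 2 * b)) powr s / (a + 2 * b)) * (2 * a - 2 * b)"
proof -
  have G: "a + 2 * b > 0" using assms by simp
  have w: "wf s a b (1/2) = (3 / (a + 2 * b)) powr s"
  proof -
    have "(1/2 + 1) / (1/2 * a + b) = 3 / (a + 2 * b)" using G by (simp add: field_simps)
    then show ?thesis by (simp add: wf_def)
  qed
  have e: "af a b (1/2) - bf (1/2) = (2 / 3) * (2 * a - 2 * b) / (a + 2 * b)"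
    using G by (simp add: af_def bf_def field_simps)
  have gen: "- s * W * ((2 / 3) * (2 * a - 2 * b) / G) = -(2 * s / 3) * (W / G) * (2 * a - 2 * b)"
    if "G \<noteq> 0" for G W :: real using that by (simp add: field_simps)
  show ?thesis unfolding d1_def w e using gen[of "a + 2 * b" "(3 / (a + 2 * b)) powr s"] G by simp
qed

lemma d2_id: "d2 s a b A = s * (s + 1) * wf s a b A * (af a b A - bf A)^2 - 2 * bf A * d1 s a b A"
  by (simp add: d2_def d1_def power2_eq_square algebra_simps)

definition Xf :: "int \<times> int \<times> int \<Rightarrow> real" where
  "Xf p = (case p of (i, j, k) \<Rightarrow> (real_of_int (i + j))^2)"
definition Pf :: "int \<times> int \<times> int \<Rightarrow> real" where
  "Pf p = (case p of (i, j, k) \<Rightarrow> (real_of_int (i + j + 2 * k))^2)"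
definition Rf :: "int \<times> int \<times> int \<Rightarrow> real" where
  "Rf p = (case p of (i, j, k) \<Rightarrow> (real_of_int (j - i))^2)"
definition Gf :: "int \<times> int \<times> int \<Rightarrow> real" where
  "Gf p = Xf p + Pf p + Rf p"
definition Vf :: "real \<Rightarrow> int \<times> int \<times> int \<Rightarrow> real" where
  "Vf s p = (3 / Gf p) powr s / Gf p"

definition sig1 :: "int \<times> int \<times> int \<Rightarrow> int \<times> int \<times> int" where
  "sig1 p = (case p of (i, j, k) \<Rightarrow> (i + k, j + k, - k))"
definition sig2 :: "int \<times> int \<times> int \<Rightarrow> int \<times> int \<times> int" where
  "sig2 p = (case p of (i, j, k) \<Rightarrow> (- i, j, k + i))"

lemma aa_X: "aa p = Xf p" by (cases p) (simp add: aa_def Xf_def)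
lemma bb_PR: "2 * bb p = Pf p + Rf p"
  by (cases p) (simp add: bb_def Pf_def Rf_def power2_eq_square algebra_simps)
lemma G_ab: "Gf p = aa p + 2 * bb p" using aa_X bb_PR by (simp add: Gf_def)

lemma sig1_props: "Xf (sig1 p) = Pf p" "Pf (sig1 p) = Xf p" "Rf (sig1 p) = Rf p" "sig1 (sig1 p) = p"
  by (cases p; simp add: sig1_def Xf_def Pf_def Rf_def algebra_simps)+
lemma sig2_props: "Xf (sig2 p) = Rf p" "Rf (sig2 p) = Xf p" "Pf (sig2 p) = Pf p" "sig2 (sig2 p) = p"
  by (cases p; simp add: sig2_def Xf_def Pf_def Rf_def algebra_simps)+

lemma sig1_K: "p \<in> KK \<Longrightarrow> sig1 p \<in> KK"
  by (cases p) (auto simp: sig1_def KK_def)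
lemma sig2_K: "p \<in> KK \<Longrightarrow> sig2 p \<in> KK"
  by (cases p) (auto simp: sig2_def KK_def)

lemma bij_sig1: "bij_betw sig1 KK KK"
  by (rule bij_betw_byWitness[where f'=sig1]) (auto simp: sig1_props sig1_K)
lemma bij_sig2: "bij_betw sig2 KK KK"
  by (rule bij_betw_byWitness[where f'=sig2]) (auto simp: sig2_props sig2_K)

lemma G_sig1: "Gf (sig1 p) = Gf p" by (simp add: Gf_def sig1_props)
lemma G_sig2: "Gf (sig2 p) = Gf p" by (simp add: Gf_def sig2_props)

lemma XPR_nonneg: "Xf p \<ge> 0" "Pf p \<ge> 0" "Rf p \<ge> 0"
  by (cases p; simp add: Xf_def Pf_def Rf_def)+

lemma VY_bound:
  assumes s: "s > 3/2" and p: "p \<in> KK" and Y: "0 \<le> Y" "Y \<le> Gf p"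
  shows "\<bar>Vf s p * Y\<bar> \<le> 1 * Wb s (aa p + bb p)"
proof -
  have s0: "s \<ge> 0" using s by simp
  note pf = pt_facts[OF p]
  have Gp: "Gf p > 0" using pf G_ab[of p] by simp
  have half: "(1/2::real) \<in> {1/4<..<1}" by simp
  have w: "wf s (aa p) (bb p) (1/2) = (3 / Gf p) powr s"
  proof -
    have "(1/2 + 1) / (1/2 * aa p + bb p) = 3 / Gf p" using Gp G_ab[of p] by (simp add: field_simps)
    then show ?thesis by (simp add: wf_def)
  qed
  have "\<bar>Vf s p * Y\<bar> = (3 / Gf p) powr s * (Y / Gf p)" using Gp Y by (simp add: Vf_def abs_mult)
  also have "\<dots> \<le> (3 / Gf p) powr s * 1" using Gp Y by (intro mult_left_mono) auto
  also have "\<dots> \<le> Wb s (aa p + bb p)" using basic_bnds(7)[OF s0 pf half] w by simp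
  finally show ?thesis by simp
qed

lemma VX_sums:
  assumes s: "s > 3/2"
  shows "(\<lambda>p. Vf s p * Xf p) summable_on KK" "(\<lambda>p. Vf s p * Pf p) summable_on KK" "(\<lambda>p. Vf s p * Rf p) summable_on KK"
  by (rule summable_on_abs_bound[OF Wp_summable[OF s, of 1]],
      rule VY_bound[OF s], auto simp: XPR_nonneg Gf_def intro: add_nonneg_nonneg)+

lemma V_sig: "Vf s (sig1 p) = Vf s p" "Vf s (sig2 p) = Vf s p"
  by (simp_all add: Vf_def G_sig1 G_sig2)

lemma VX_eq:
  shows "infsum (\<lambda>p. Vf s p * Pf p) KK = infsum (\<lambda>p. Vf s p * Xf p) KK"
    and "infsum (\<lambda>p. Vf s p * Rf p) KK = infsum (\<lambda>p. Vf s p * Xf p) KK"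
proof -
  have "infsum (\<lambda>p. Vf s (sig1 p) * Xf (sig1 p)) KK = infsum (\<lambda>p. Vf s p * Xf p) KK"
    by (rule infsum_reindex_bij_betw[OF bij_sig1])
  then show "infsum (\<lambda>p. Vf s p * Pf p) KK = infsum (\<lambda>p. Vf s p * Xf p) KK"
    by (simp add: V_sig sig1_props)
  have "infsum (\<lambda>p. Vf s (sig2 p) * Xf (sig2 p)) KK = infsum (\<lambda>p. Vf s p * Xf p) KK"
    by (rule infsum_reindex_bij_betw[OF bij_sig2])
  then show "infsum (\<lambda>p. Vf s p * Rf p) KK = infsum (\<lambda>p. Vf s p * Xf p) KK"
    by (simp add: V_sig sig2_props)
qed

lemma d1_sum_zero:
  assumes s: "s > 3/2"
  shows "infsum (\<lambda>p. d1 s (aa p) (bb p) (1/2)) KK = 0"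
proof -
  have pt: "d1 s (aa p) (bb p) (1/2) = -(2 * s / 3) * (2 * (Vf s p * Xf p) - Vf s p * Pf p - Vf s p * Rf p)"
    if p: "p \<in> KK" for p
  proof -
    note pf = pt_facts[OF p]
    have "d1 s (aa p) (bb p) (1/2) = -(2 * s / 3) * ((3 / (aa p + 2 * bb p)) powr s / (aa p + 2 * bb p)) * (2 * aa p - 2 * bb p)"
      by (rule d1_half[OF pf])
    also have "\<dots> = -(2 * s / 3) * Vf s p * (2 * Xf p - (Pf p + Rf p))"
      by (simp add: Vf_def G_ab aa_X bb_PR[symmetric])
    also have "\<dots> = -(2 * s / 3) * (2 * (Vf s p * Xf p) - Vf s p * Pf p - Vf s p * Rf p)"
    proof -
      have gen: "c * V * (2 * X - (P + R)) = c * (2 * (V * X) - V * P - V * R)" for c V X P R :: real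
        by (simp add: algebra_simps)
      show ?thesis by (rule gen)
    qed
    finally show ?thesis .
  qed
  note S = VX_sums[OF s]
  have S2: "(\<lambda>p. 2 * (Vf s p * Xf p)) summable_on KK" using S(1) by (rule summable_on_cmult_right)
  have S3: "(\<lambda>p. 2 * (Vf s p * Xf p) - Vf s p * Pf p) summable_on KK" using S2 S(2) by (rule summable_on_diff_real)
  have "infsum (\<lambda>p. d1 s (aa p) (bb p) (1/2)) KK
      = infsum (\<lambda>p. -(2 * s / 3) * (2 * (Vf s p * Xf p) - Vf s p * Pf p - Vf s p * Rf p)) KK"
    using pt by (rule infsum_cong)
  also have "\<dots> = -(2 * s / 3) * infsum (\<lambda>p. 2 * (Vf s p * Xf p) - Vf s p * Pf p - Vf s p * Rf p) KK"
    by (rule infsum_cmult_right) (rule summable_on_diff_real[OF S3 S(3)])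
  also have "infsum (\<lambda>p. 2 * (Vf s p * Xf p) - Vf s p * Pf p - Vf s p * Rf p) KK
      = infsum (\<lambda>p. 2 * (Vf s p * Xf p) - Vf s p * Pf p) KK - infsum (\<lambda>p. Vf s p * Rf p) KK"
    by (rule infsum_diff_real[OF S3 S(3)])
  also have "infsum (\<lambda>p. 2 * (Vf s p * Xf p) - Vf s p * Pf p) KK
      = infsum (\<lambda>p. 2 * (Vf s p * Xf p)) KK - infsum (\<lambda>p. Vf s p * Pf p) KK"
    by (rule infsum_diff_real[OF S2 S(2)])
  also have "infsum (\<lambda>p. 2 * (Vf s p * Xf p)) KK = 2 * infsum (\<lambda>p. Vf s p * Xf p) KK"
    by (rule infsum_cmult_right) (rule S(1))
  finally show ?thesis by (simp add: VX_eq)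
qed

lemma d2_sum_pos:
  assumes s: "s > 3/2"
  shows "infsum (\<lambda>p. d2 s (aa p) (bb p) (1/2)) KK > 0"
proof -
  have s0: "s \<ge> 0" using s by simp
  have half: "(1/2::real) \<in> {1/4<..<1}" by simp
  define E where "E p = wf s (aa p) (bb p) (1/2) * (af (aa p) (bb p) (1/2) - bf (1/2))^2" for p
  have SE: "E summable_on KK"
  proof (rule summable_on_abs_bound[OF Wp_summable[OF s, of 16]])
    fix p assume p: "p \<in> KK"
    note bb = basic_bnds[OF s0 pt_facts[OF p] half]
    have e4: "\<bar>af (aa p) (bb p) (1/2) - bf (1/2)\<bar> \<le> 4" using bb by auto
    have e16: "(af (aa p) (bb p) (1/2) - bf (1/2))^2 \<le> 16"
    proof -
      have "\<bar>af (aa p) (bb p) (1/2) - bf (1/2)\<bar>^2 \<le> 4^2" using e4 by (intro power_mono) auto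
      then show ?thesis by simp
    qed
    have "\<bar>E p\<bar> = wf s (aa p) (bb p) (1/2) * (af (aa p) (bb p) (1/2) - bf (1/2))^2"
      using bb by (simp add: E_def abs_mult)
    also have "\<dots> \<le> Wb s (aa p + bb p) * 16"
      using bb e16 by (intro mult_mono) auto
    finally show "\<bar>E p\<bar> \<le> 16 * Wb s (aa p + bb p)" by simp
  qed
  have S1: "(\<lambda>p. d1 s (aa p) (bb p) (1/2)) summable_on KK"
  proof (rule summable_on_abs_bound[OF Wp_summable[OF s, of "4 * s"]])
    fix p assume p: "p \<in> KK"
    show "\<bar>d1 s (aa p) (bb p) (1/2)\<bar> \<le> 4 * s * Wb s (aa p + bb p)" using deriv_bnds(2)[OF s0 pt_facts[OF p] half] by simp
  qed
  have SA: "(\<lambda>p. s * (s + 1) * E p) summable_on KK" using SE by (rule summable_on_cmult_right)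
  have SB: "(\<lambda>p. 2 * bf (1/2) * d1 s (aa p) (bb p) (1/2)) summable_on KK" using S1 by (rule summable_on_cmult_right)
  have "infsum (\<lambda>p. d2 s (aa p) (bb p) (1/2)) KK = infsum (\<lambda>p. s * (s + 1) * E p - 2 * bf (1/2) * d1 s (aa p) (bb p) (1/2)) KK"
    by (simp add: d2_id E_def mult.assoc)
  also have "\<dots> = infsum (\<lambda>p. s * (s + 1) * E p) KK - infsum (\<lambda>p. 2 * bf (1/2) * d1 s (aa p) (bb p) (1/2)) KK"
    by (rule infsum_diff_real[OF SA SB])
  also have "infsum (\<lambda>p. 2 * bf (1/2) * d1 s (aa p) (bb p) (1/2)) KK = 2 * bf (1/2) * infsum (\<lambda>p. d1 s (aa p) (bb p) (1/2)) KK"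
    by (rule infsum_cmult_right) (rule S1)
  also have "infsum (\<lambda>p. s * (s + 1) * E p) KK = s * (s + 1) * infsum E KK"
    by (rule infsum_cmult_right) (rule SE)
  finally have eq: "infsum (\<lambda>p. d2 s (aa p) (bb p) (1/2)) KK = s * (s + 1) * infsum E KK"
    by (simp add: d1_sum_zero[OF s])
  have "0 < infsum E KK"
  proof -
    have h0: "((\<lambda>p. 0::real) has_sum 0) KK" by simp
    have hE: "(E has_sum infsum E KK) KK" using SE by simp
    have p0: "(1, 1, 0) \<in> KK" by (simp add: KK_def)
    have "aa (1, 1, 0) = 4" "bb (1, 1, 0) = 2" by (simp_all add: aa_def bb_def)
    then have "E (1, 1, 0) = ((3/2) / 4) powr s * (1/3)^2"
      by (simp add: E_def wf_def af_def bf_def)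
    then have E0: "E (1, 1, 0) > 0" by simp
    have En: "\<And>p. p \<in> KK \<Longrightarrow> 0 \<le> E p" by (simp add: E_def wf_def)
    show ?thesis by (rule has_sum_strict_mono[OF h0 hE En p0 E0])
  qed
  moreover have "s * (s + 1) > 0" using s by simp
  ultimately show ?thesis using eq by simp
qed

theorem theorem3p1:
  fixes s :: real
  assumes "s > 3/2"
  shows "((\<lambda>A. L A s) has_real_derivative 0) (at (1/2))
       \<and> (\<exists>D2>0. (deriv (\<lambda>A. L A s) has_real_derivative D2) (at (1/2)))"
proof
  have half: "(1/2::real) \<in> II" by (simp add: II_def)
  show "((\<lambda>A. L A s) has_real_derivative 0) (at (1/2))"
    using first_deriv[OF assms half] d1_sum_zero[OF assms] by simp
  show "\<exists>D2>0. (deriv (\<lambda>A. L A s) has_real_derivative D2) (at (1/2))"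
    using second_deriv[OF assms half] d2_sum_pos[OF assms] by blast
qed

end
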